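(* Let $p$ be a positive integer and $d$ a positive integer. Then, as formal power series, $T_d(x)=H_p(x)^d$.
   Context: A monotonic lattice path is a sequence of lattice points $P_0P_1\ldots P_l$ with $P_{i+1}-P_i\in\{(1,0),(0,1)\}$. Fix a positive integer $p$. For integers $n\ge0$, $d>0$, $T(n,d)$ is the number of monotonic lattice paths from $(0,0)$ to $(n,pn+d)$ all of whose points other than the first and last lie strictly below the line $y=px+d$ (with $T(0,d)=1$), and $T_d(x)=\sum_{n\ge0}T(n,d)x^n$. $M(p,n)=\frac{1}{pn+n+1}\binom{pn+n+1}{n}$ (the number of monotonic lattice paths from $(0,0)$ to $(n,pn)$ with no point strictly above $y=px$) and $H_p(x)=\sum_{n\ge0}M(p,n)x^n$. *)

theory Defs
  imports Complex_Main "HOL-Computational_Algebra.Formal_Power_Series"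
begin

definition mono_lattice_path :: "(int \<times> int) list \<Rightarrow> bool" where
  "mono_lattice_path ps \<longleftrightarrow> ps \<noteq> [] \<and>
     (\<forall>i. i + 1 < length ps \<longrightarrow>
        ps ! (i+1) = (fst (ps ! i) + 1, snd (ps ! i)) \<or>
        ps ! (i+1) = (fst (ps ! i), snd (ps ! i) + 1))"

definition T_paths :: "nat \<Rightarrow> nat \<Rightarrow> nat \<Rightarrow> (int \<times> int) list set" where
  "T_paths p n d = {ps. mono_lattice_path ps \<and> hd ps = (0,0) \<and>
      last ps = (int n, int p * int n + int d) \<and>
      (\<forall>i. 0 < i \<and> i + 1 < length ps \<longrightarrow>
         snd (ps ! i) < int p * fst (ps ! i) + int d)}"

definition T :: "nat \<Rightarrow> nat \<Rightarrow> nat \<Rightarrow> nat" where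
  "T p n d = (if n = 0 then 1 else card (T_paths p n d))"

definition T_fps :: "nat \<Rightarrow> nat \<Rightarrow> real fps" where
  "T_fps p d = Abs_fps (\<lambda>n. real (T p n d))"

definition M :: "nat \<Rightarrow> nat \<Rightarrow> real" where
  "M p n = 1 / real (p*n + n + 1) * real ((p*n + n + 1) choose n)"

definition H :: "nat \<Rightarrow> real fps" where
  "H p = Abs_fps (\<lambda>n. M p n)"

end

theory Submission
  imports Defs
begin


fun W :: "nat \<Rightarrow> nat \<Rightarrow> nat \<Rightarrow> nat" where
  "W p 0 k = 1"
| "W p (Suc m) 0 = 0"
| "W p (Suc m) (Suc k) = W p (Suc m) k + W p m (Suc k + p)"

definition A :: "nat \<Rightarrow> nat \<Rightarrow> nat \<Rightarrow> real" where
  "A p n k = (if k = 0 then (if n = 0 then 1 else 0)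
     else real k / real ((p+1)*n+k) * real (((p+1)*n+k) choose n))"

lemma aux:
  fixes C D k m b p N :: real
  assumes h: "(m+1)*D = (b+1)*C" and hN: "N = m+b+1" and hb: "b = p*(m+1)+k"
    and "m \<ge> 0" "k \<ge> 0" "p \<ge> 0"
  shows "(k+1)/(N+1)*(C+D) = k/N*D + (k+1+p)/N*C"
proof -
  have m1: "m+1 > 0" using assms by simp
  have b0: "b \<ge> 0" using hb assms by simp
  have Np: "N > 0" "N+1 > 0" using hN b0 assms(4) by linarith+
  have Dv: "D = (b+1)*C/(m+1)" using h m1 by (simp add: field_simps)
  have "(k+1)*(C+D)*N*(m+1) = (k*D + (k+1+p)*C)*(N+1)*(m+1)"
  proof -
    have e: "D*(m+1) = (b+1)*C" using h by (simp add: algebra_simps)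
    have "(k+1)*(C+D)*N*(m+1) = (k+1)*N*(C*(m+1) + D*(m+1))" by (simp add: algebra_simps)
    also have "\<dots> = (k+1)*N*(C*(m+1) + (b+1)*C)" unfolding e ..
    also have "\<dots> = (k*(b+1)*C + (k+1+p)*C*(m+1))*(N+1)" unfolding hN hb by (simp add: algebra_simps)
    also have "\<dots> = (k*(D*(m+1)) + (k+1+p)*C*(m+1))*(N+1)" unfolding e by (simp add: mult.assoc)
    also have "\<dots> = (k*D + (k+1+p)*C)*(N+1)*(m+1)" by (simp add: algebra_simps)
    finally show ?thesis .
  qed
  then have q: "(k+1)*(C+D)*N = (k*D + (k+1+p)*C)*(N+1)" using m1 by (metis mult_right_cancel less_irrefl)
  have nz: "N \<noteq> 0" "N+1 \<noteq> 0" using Np by simp_all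
  have l: "(k+1)/(N+1)*(C+D) = ((k+1)*(C+D)*N)/((N+1)*N)"
    using nonzero_mult_divide_mult_cancel_right[OF nz(1), of "(k+1)*(C+D)" "N+1"] by simp
  have r: "k/N*D + (k+1+p)/N*C = ((k*D + (k+1+p)*C)*(N+1))/(N*(N+1))"
    using nonzero_mult_divide_mult_cancel_right[OF nz(2), of "k*D + (k+1+p)*C" N]
    by (simp add: add_divide_distrib nz times_divide_eq_left[symmetric] del: times_divide_eq_left)
  show ?thesis unfolding l r q by (simp add: mult.commute)
qed

lemma A_rec: "A p (Suc m) (Suc k) = A p (Suc m) k + A p m (Suc k + p)"
proof -
  define N0 where "N0 = (p+1)*(Suc m) + k"
  define b where "b = p*(Suc m) + k"
  have N0b: "N0 = Suc (m + b)" unfolding N0_def b_def by simp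
  have e1: "(p+1)*Suc m + Suc k = Suc N0" unfolding N0_def by simp
  have e2: "(p+1)*m + (Suc k + p) = N0" unfolding N0_def by (simp add: algebra_simps)
  define C where "C = real (N0 choose m)"
  have f1: "real (Suc m) * real (N0 choose Suc m) = real (Suc b) * C"
    unfolding C_def N0b using Suc_times_binomial_add[of m b]
    by (metis of_nat_mult)
  have f2: "real (Suc N0 choose Suc m) = C + real (N0 choose Suc m)"
    unfolding C_def by simp
  have Nb: "real N0 = real m + real b + 1" using N0b by simp
  have bN: "real b = real p * (real m + 1) + real k" unfolding b_def by (simp add: algebra_simps)
  have pos: "real N0 > 0" using N0b by simp
  have LHS: "A p (Suc m) (Suc k) = real (Suc k) / real (Suc N0) * (C + real (N0 choose Suc m))"
    unfolding A_def e1 f2 by simp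
  have R2: "A p m (Suc k + p) = real (Suc k + p) / real N0 * C"
    unfolding A_def e2 C_def by simp
  have R1: "A p (Suc m) k = real k / real N0 * real (N0 choose Suc m)"
    unfolding A_def N0_def by simp
  define D where "D = real (N0 choose Suc m)"
  have f1': "(real m + 1) * D = (real b + 1) * C" using f1 unfolding D_def by (simp add: algebra_simps)
  have "(real k + 1)/(real N0 + 1)*(C+D) = real k/real N0*D + (real k+1+real p)/real N0*C"
    by (rule aux[OF f1' Nb bN]) simp_all
  then show ?thesis unfolding LHS R1 R2 D_def[symmetric] by (simp add: add_ac)
qed

lemma W_A: "real (W p m k) = A p m k"
proof (induction p m k rule: W.induct)
  case (1 p k) then show ?case by (simp add: A_def)
next
  case (2 p m) then show ?case by (simp add: A_def)
next
  case (3 p m k) then show ?case using A_rec[of p m k] by simp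
qed



definition S :: "nat \<Rightarrow> real fps" where "S p = Abs_fps (\<lambda>n. real (W p n 1))"

lemma S_eq: "S p = 1 + fps_X * Abs_fps (\<lambda>n. real (W p n (p+1)))"
proof (rule fps_ext)
  fix n show "fps_nth (S p) n = fps_nth (1 + fps_X * Abs_fps (\<lambda>n. real (W p n (p+1)))) n"
    by (cases n) (simp_all add: S_def fps_X_mult_nth)
qed

lemma S_pow: "fps_nth (S p ^ d) n = real (W p n d)"
proof (induction n arbitrary: d rule: less_induct)
  case (less n)
  show ?case
  proof (induction d)
    case 0 then show ?case by (cases n) simp_all
  next
    case (Suc e)
    define V where "V = Abs_fps (\<lambda>n. real (W p n (p+1)))"
    have "S p ^ Suc e = S p ^ e + fps_X * (V * S p ^ e)"
      by (simp add: S_eq[of p, folded V_def] algebra_simps)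
    then have eq: "fps_nth (S p ^ Suc e) n = fps_nth (S p ^ e) n + fps_nth (fps_X * (V * S p ^ e)) n" by simp
    show ?case
    proof (cases n)
      case 0 then show ?thesis using eq Suc.IH by (simp add: fps_X_mult_nth del: power_Suc)
    next
      case (Suc m)
      have "fps_nth (V * S p ^ e) m = (\<Sum>i=0..m. fps_nth V i * fps_nth (S p ^ e) (m-i))" by (rule fps_mult_nth)
      also have "\<dots> = (\<Sum>i=0..m. fps_nth (S p ^ (p+1)) i * fps_nth (S p ^ e) (m-i))"
        by (rule sum.cong) (use less Suc in \<open>auto simp: V_def simp del: power_Suc\<close>)
      also have "\<dots> = fps_nth (S p ^ (p+1) * S p ^ e) m" by (rule fps_mult_nth[symmetric])
      also have "\<dots> = fps_nth (S p ^ (p+1+e)) m" by (simp only: power_add)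
      also have "\<dots> = real (W p m (p+1+e))" using less Suc by (simp del: power_Suc)
      finally have "fps_nth (V * S p ^ e) m = real (W p m (p+1+e))" .
      then show ?thesis using eq Suc.IH \<open>n = Suc m\<close> by (simp add: fps_X_mult_nth add_ac)
    qed
  qed
qed

lemma H_S: "H p = S p"
  unfolding H_def S_def
proof (rule arg_cong[where f=Abs_fps], rule ext)
  fix n
  have "real (W p n 1) = A p n 1" by (rule W_A)
  also have "\<dots> = M p n" by (simp add: A_def M_def algebra_simps)
  finally show "M p n = real (W p n 1)" by simp
qed



definition stp :: "int \<times> int \<Rightarrow> int \<times> int \<Rightarrow> bool" where
  "stp a b \<longleftrightarrow> b = (fst a + 1, snd a) \<or> b = (fst a, snd a + 1)"

lemma mono_single[simp]: "mono_lattice_path [a]"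
  by (simp add: mono_lattice_path_def)

lemma mono_Cons2: "mono_lattice_path (a # b # rest) \<longleftrightarrow> stp a b \<and> mono_lattice_path (b # rest)"
proof
  assume h: "mono_lattice_path (a # b # rest)"
  have "stp a b" using h unfolding mono_lattice_path_def stp_def by (metis One_nat_def add_0 length_Cons nth_Cons_0 nth_Cons_Suc zero_less_Suc Suc_less_eq add_Suc_right)
  moreover have "mono_lattice_path (b # rest)"
    unfolding mono_lattice_path_def
  proof (intro conjI allI impI)
    fix i assume "i + 1 < length (b # rest)"
    then have "Suc i + 1 < length (a # b # rest)" by simp
    then show "(b # rest) ! (i + 1) = (fst ((b # rest) ! i) + 1, snd ((b # rest) ! i)) \<or>
         (b # rest) ! (i + 1) = (fst ((b # rest) ! i), snd ((b # rest) ! i) + 1)"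
      using h unfolding mono_lattice_path_def by (metis add_Suc nth_Cons_Suc)
  qed simp
  ultimately show "stp a b \<and> mono_lattice_path (b # rest)" ..
next
  assume h: "stp a b \<and> mono_lattice_path (b # rest)"
  show "mono_lattice_path (a # b # rest)"
    unfolding mono_lattice_path_def
  proof (intro conjI allI impI)
    fix i assume i: "i + 1 < length (a # b # rest)"
    show "(a # b # rest) ! (i + 1) = (fst ((a # b # rest) ! i) + 1, snd ((a # b # rest) ! i)) \<or>
         (a # b # rest) ! (i + 1) = (fst ((a # b # rest) ! i), snd ((a # b # rest) ! i) + 1)"
    proof (cases i)
      case 0 then show ?thesis using h by (simp add: stp_def)
    next
      case (Suc j)
      then have "j + 1 < length (b # rest)" using i by simp
      then show ?thesis using h Suc unfolding mono_lattice_path_def by simp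
    qed
  qed simp
qed

lemma mono_ends:
  "mono_lattice_path ps \<Longrightarrow>
     fst (last ps) + snd (last ps) = fst (hd ps) + snd (hd ps) + int (length ps - 1) \<and>
     fst (hd ps) \<le> fst (last ps) \<and> snd (hd ps) \<le> snd (last ps)"
proof (induction ps)
  case Nil then show ?case by (simp add: mono_lattice_path_def)
next
  case (Cons a qs)
  show ?case
  proof (cases qs)
    case Nil then show ?thesis by simp
  next
    case (Cons b rest)
    have st: "stp a b" and m: "mono_lattice_path qs" using Cons.prems mono_Cons2 \<open>qs = b # rest\<close> by auto
    note ih = Cons.IH[OF m]
    show ?thesis using st ih \<open>qs = b # rest\<close> unfolding stp_def by auto
  qed
qed

definition Ept :: "nat \<Rightarrow> nat \<Rightarrow> nat \<Rightarrow> int \<times> int" where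
  "Ept p n d = (int n, int p * int n + int d)"

definition bel :: "nat \<Rightarrow> nat \<Rightarrow> int \<times> int \<Rightarrow> bool" where
  "bel p d s \<longleftrightarrow> snd s < int p * fst s + int d"

definition P :: "nat \<Rightarrow> nat \<Rightarrow> nat \<Rightarrow> int \<times> int \<Rightarrow> (int \<times> int) list set" where
  "P p n d s = {ps. mono_lattice_path ps \<and> hd ps = s \<and> last ps = Ept p n d \<and>
      (\<forall>i. 0 < i \<and> i + 1 < length ps \<longrightarrow> bel p d (ps ! i))}"

lemma T_paths_P: "T_paths p n d = P p n d (0,0)"
  unfolding T_paths_def P_def Ept_def bel_def by simp


lemma P_ne: "ps \<in> P p n d s \<Longrightarrow> ps \<noteq> []"
  unfolding P_def mono_lattice_path_def by auto

lemma P_E: "P p n d (Ept p n d) = {[Ept p n d]}"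
proof
  show "P p n d (Ept p n d) \<subseteq> {[Ept p n d]}"
  proof
    fix ps assume h: "ps \<in> P p n d (Ept p n d)"
    then have m: "mono_lattice_path ps" and hl: "hd ps = Ept p n d" "last ps = Ept p n d"
      unfolding P_def by auto
    have "int (length ps - 1) = 0" using mono_ends[OF m] hl by simp
    moreover have "ps \<noteq> []" using P_ne h by blast
    ultimately have "length ps = 1" by (cases ps) auto
    then obtain a where "ps = [a]" by (metis One_nat_def length_0_conv length_Suc_conv)
    then show "ps \<in> {[Ept p n d]}" using hl by simp
  qed
next
  show "{[Ept p n d]} \<subseteq> P p n d (Ept p n d)" unfolding P_def by simp
qed

lemma P_far: "fst s > int n \<Longrightarrow> P p n d s = {}"
proof (rule ccontr)
  assume "fst s > int n" "P p n d s \<noteq> {}"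
  then obtain ps where h: "ps \<in> P p n d s" "fst s > int n" by blast
  then have m: "mono_lattice_path ps" and hl: "hd ps = s" "last ps = Ept p n d"
    unfolding P_def by auto
  show False using mono_ends[OF m] hl h(2) by (simp add: Ept_def)
qed

lemma P_Cons:
  assumes "qs \<noteq> []"
  shows "s # qs \<in> P p n d s \<longleftrightarrow>
    stp s (hd qs) \<and> qs \<in> P p n d (hd qs) \<and> (hd qs = Ept p n d \<or> bel p d (hd qs))"
proof -
  obtain b rest where qs: "qs = b # rest" using assms by (cases qs) auto
  show ?thesis
  proof
    assume h: "s # qs \<in> P p n d s"
    then have m: "mono_lattice_path (s # b # rest)" and l: "last (s # b # rest) = Ept p n d"
      and int: "\<And>i. 0 < i \<Longrightarrow> i + 1 < length (s # b # rest) \<Longrightarrow> bel p d ((s # b # rest) ! i)"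
      unfolding P_def qs by auto
    have st: "stp s b" and m2: "mono_lattice_path (b # rest)" using m mono_Cons2 by auto
    have int2: "\<forall>i. 0 < i \<and> i + 1 < length (b # rest) \<longrightarrow> bel p d ((b # rest) ! i)"
    proof (intro allI impI)
      fix i assume "0 < i \<and> i + 1 < length (b # rest)"
      then have "bel p d ((s # b # rest) ! Suc i)" using int[of "Suc i"] by simp
      then show "bel p d ((b # rest) ! i)" by simp
    qed
    have "b = Ept p n d \<or> bel p d b"
    proof (cases rest)
      case Nil then show ?thesis using l by simp
    next
      case (Cons c r) then show ?thesis using int[of 1] by simp
    qed
    then show "stp s (hd qs) \<and> qs \<in> P p n d (hd qs) \<and> (hd qs = Ept p n d \<or> bel p d (hd qs))"
      using st m2 int2 l unfolding qs P_def by simp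
  next
    assume h: "stp s (hd qs) \<and> qs \<in> P p n d (hd qs) \<and> (hd qs = Ept p n d \<or> bel p d (hd qs))"
    then have st: "stp s b" and q: "b # rest \<in> P p n d b" and bb: "b = Ept p n d \<or> bel p d b"
      unfolding qs by auto
    then have m2: "mono_lattice_path (b # rest)" and l: "last (b # rest) = Ept p n d"
      and int: "\<And>i. 0 < i \<Longrightarrow> i + 1 < length (b # rest) \<Longrightarrow> bel p d ((b # rest) ! i)"
      unfolding P_def by auto
    have int2: "\<forall>i. 0 < i \<and> i + 1 < length (s # b # rest) \<longrightarrow> bel p d ((s # b # rest) ! i)"
    proof (intro allI impI)
      fix i assume i: "0 < i \<and> i + 1 < length (s # b # rest)"
      then obtain j where j: "i = Suc j" by (cases i) auto
      show "bel p d ((s # b # rest) ! i)"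
      proof (cases j)
        case 0
        have "bel p d b"
        proof (cases "b = Ept p n d")
          case True
          then have "b # rest = [Ept p n d]" using q P_E by auto
          then show ?thesis using i j 0 by simp
        next
          case False then show ?thesis using bb by simp
        qed
        then show ?thesis using j 0 by simp
      next
        case (Suc j')
        then show ?thesis using int[of j] i j by simp
      qed
    qed
    show "s # qs \<in> P p n d s" unfolding qs P_def using st m2 l int2 mono_Cons2 by simp
  qed
qed

definition Q :: "nat \<Rightarrow> nat \<Rightarrow> nat \<Rightarrow> int \<times> int \<Rightarrow> (int \<times> int) list set" where
  "Q p n d t = (if t = Ept p n d \<or> bel p d t then P p n d t else {})"

lemma P_hd: "qs \<in> P p n d t \<Longrightarrow> hd qs = t" unfolding P_def by simp

lemma P_step:
  assumes "s \<noteq> Ept p n d"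
  shows "P p n d s = Cons s ` (Q p n d (fst s + 1, snd s) \<union> Q p n d (fst s, snd s + 1))"
proof
  show "P p n d s \<subseteq> Cons s ` (Q p n d (fst s + 1, snd s) \<union> Q p n d (fst s, snd s + 1))"
  proof
    fix ps assume h: "ps \<in> P p n d s"
    then obtain a qs where ps: "ps = a # qs" using P_ne[OF h] by (cases ps) auto
    have a: "a = s" using h ps unfolding P_def by simp
    have "qs \<noteq> []" using h ps a assms unfolding P_def by auto
    then have c: "stp s (hd qs) \<and> qs \<in> P p n d (hd qs) \<and> (hd qs = Ept p n d \<or> bel p d (hd qs))"
      using P_Cons h ps a by blast
    then have "qs \<in> Q p n d (fst s + 1, snd s) \<union> Q p n d (fst s, snd s + 1)"
      unfolding Q_def stp_def by auto
    then show "ps \<in> Cons s ` (Q p n d (fst s + 1, snd s) \<union> Q p n d (fst s, snd s + 1))"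
      using ps a by blast
  qed
next
  show "Cons s ` (Q p n d (fst s + 1, snd s) \<union> Q p n d (fst s, snd s + 1)) \<subseteq> P p n d s"
  proof
    fix ps assume "ps \<in> Cons s ` (Q p n d (fst s + 1, snd s) \<union> Q p n d (fst s, snd s + 1))"
    then obtain qs t where qs: "ps = s # qs" "qs \<in> P p n d t" "t = Ept p n d \<or> bel p d t"
      "t = (fst s + 1, snd s) \<or> t = (fst s, snd s + 1)"
      unfolding Q_def by (auto split: if_splits)
    have "hd qs = t" using qs P_hd by blast
    moreover have "qs \<noteq> []" using qs P_ne by blast
    ultimately show "ps \<in> P p n d s" using P_Cons qs unfolding stp_def by auto
  qed
qed



lemma Q_sub: "Q p n d t \<subseteq> P p n d t" unfolding Q_def by auto

lemma card_step:
  assumes "s \<noteq> Ept p n d" "finite (Q p n d (fst s + 1, snd s))" "finite (Q p n d (fst s, snd s + 1))"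
  shows "finite (P p n d s) \<and> card (P p n d s) = card (Q p n d (fst s + 1, snd s)) + card (Q p n d (fst s, snd s + 1))"
proof -
  have disj: "Q p n d (fst s + 1, snd s) \<inter> Q p n d (fst s, snd s + 1) = {}"
  proof (rule ccontr)
    assume "Q p n d (fst s + 1, snd s) \<inter> Q p n d (fst s, snd s + 1) \<noteq> {}"
    then obtain q where "q \<in> P p n d (fst s + 1, snd s)" "q \<in> P p n d (fst s, snd s + 1)"
      using Q_sub by blast
    then have "hd q = (fst s + 1, snd s)" "hd q = (fst s, snd s + 1)" using P_hd by blast+
    then show False by simp
  qed
  have "card (Cons s ` (Q p n d (fst s + 1, snd s) \<union> Q p n d (fst s, snd s + 1))) =
        card (Q p n d (fst s + 1, snd s) \<union> Q p n d (fst s, snd s + 1))"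
    by (rule card_image) (simp add: inj_on_def)
  also have "\<dots> = card (Q p n d (fst s + 1, snd s)) + card (Q p n d (fst s, snd s + 1))"
    using assms disj by (simp add: card_Un_disjoint)
  finally show ?thesis using P_step[OF assms(1)] assms by simp
qed

lemma count:
  assumes "fst s \<le> int n" "s = Ept p n d \<or> bel p d s"
  shows "finite (P p n d s) \<and> card (P p n d s) = W p (nat (int n - fst s)) (nat (int p * fst s + int d - snd s))"
  using assms
proof (induction "nat (int n - fst s) + nat (int p * int n + int d - snd s)" arbitrary: s rule: less_induct)
  case less
  obtain x y where s: "s = (x, y)" by (cases s)
  show ?case
  proof (cases "s = Ept p n d")
    case True
    then show ?thesis using P_E[of p n d] by (simp add: Ept_def)
  next
    case False
    then have b: "y < int p * x + int d" using less.prems s by (simp add: bel_def)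
    have xn: "x \<le> int n" using less.prems s by simp
    have pxn: "int p * x \<le> int p * int n" using xn by (simp add: mult_left_mono)
    have Q2: "finite (Q p n d (x, y + 1)) \<and> card (Q p n d (x, y + 1)) =
       (if x = int n \<and> y + 1 = int p * int n + int d then 1
        else if y + 1 < int p * x + int d then W p (nat (int n - x)) (nat (int p * x + int d - (y + 1)))
        else 0)"
    proof (cases "(x, y + 1) = Ept p n d")
      case True
      then show ?thesis unfolding Q_def using P_E[of p n d] by (simp add: Ept_def)
    next
      case F: False
      show ?thesis
      proof (cases "y + 1 < int p * x + int d")
        case True
        have "nat (int n - fst (x, y+1)) + nat (int p * int n + int d - snd (x, y+1)) <
              nat (int n - fst s) + nat (int p * int n + int d - snd s)"
          using s b pxn by simp
        from less.hyps[OF this] True xn F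
        show ?thesis unfolding Q_def by (simp add: bel_def Ept_def)
      next
        case False
        then show ?thesis using F unfolding Q_def by (auto simp: bel_def Ept_def)
      qed
    qed
    have Q1: "finite (Q p n d (x + 1, y)) \<and> card (Q p n d (x + 1, y)) =
       (if x < int n then W p (nat (int n - x - 1)) (nat (int p * (x + 1) + int d - y)) else 0)"
    proof (cases "x < int n")
      case True
      have bel1: "bel p d (x + 1, y)" using b by (simp add: bel_def algebra_simps)
      have "nat (int n - fst (x+1, y)) + nat (int p * int n + int d - snd (x+1, y)) <
              nat (int n - fst s) + nat (int p * int n + int d - snd s)"
        using s True by simp
      from less.hyps[OF this] True bel1
      show ?thesis unfolding Q_def by (simp add: algebra_simps)
    next
      case False
      then have "P p n d (x + 1, y) = {}" by (intro P_far) simp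
      then show ?thesis using False unfolding Q_def by simp
    qed
    have cs: "finite (P p n d s) \<and> card (P p n d s) = card (Q p n d (x + 1, y)) + card (Q p n d (x, y + 1))"
      using card_step[OF False] Q1 Q2 s by simp
    define k where "k = nat (int p * x + int d - y - 1)"
    have kk: "nat (int p * x + int d - y) = Suc k" using b unfolding k_def by simp
    show ?thesis
    proof (cases "x < int n")
      case True
      define m where "m = nat (int n - x - 1)"
      have mm: "nat (int n - x) = Suc m" using True unfolding m_def by simp
      have e1: "nat (int p * (x + 1) + int d - y) = Suc k + p" using b unfolding k_def by (simp add: algebra_simps)
      have e2: "nat (int p * x + int d - (y + 1)) = k" unfolding k_def by (simp add: algebra_simps)
      have c1: "card (Q p n d (x+1,y)) = W p m (Suc k + p)"
        using Q1 True e1 unfolding m_def by simp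
      have xne: "x \<noteq> int n" using True by simp
      have c2: "card (Q p n d (x,y+1)) = W p (Suc m) k"
      proof (cases "y + 1 < int p * x + int d")
        case True
        then have "card (Q p n d (x,y+1)) = W p (nat (int n - x)) (nat (int p * x + int d - (y + 1)))"
          using Q2 xne by simp
        then show ?thesis unfolding mm e2 .
      next
        case False
        then have "k = 0" unfolding k_def by simp
        moreover have "card (Q p n d (x,y+1)) = 0" using Q2 xne False by simp
        ultimately show ?thesis by simp
      qed
      have "W p (nat (int n - fst s)) (nat (int p * fst s + int d - snd s)) = W p (Suc m) (Suc k)"
        using s mm kk by simp
      also have "\<dots> = card (P p n d s)" using cs c1 c2 by simp
      finally show ?thesis using cs by simp
    next
      case False
      then have xe: "x = int n" using xn by simp
      have w1: "W p (nat (int n - fst s)) (nat (int p * fst s + int d - snd s)) = 1" using xe s by simp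
      have c1: "card (Q p n d (x + 1, y)) = 0" using Q1 False by simp
      have c2: "card (Q p n d (x, y + 1)) = 1"
      proof (cases "y + 1 = int p * int n + int d")
        case True then show ?thesis using Q2 xe by simp
      next
        case F2: False
        then have "y + 1 < int p * x + int d" using b xe by simp
        then show ?thesis using Q2 xe F2 by simp
      qed
      show ?thesis using cs c1 c2 w1 by simp
    qed
  qed
qed

lemma T_W: "0 < d \<Longrightarrow> T p n d = W p n d"
proof (cases "n = 0")
  case True then show ?thesis by (simp add: T_def)
next
  case False
  assume d: "0 < d"
  have "bel p d (0,0)" using d by (simp add: bel_def)
  from count[of "(0,0)" n p d] this
  show ?thesis using False by (simp add: T_def T_paths_P)
qed


theorem mainTheorem8:
  fixes p d :: nat
  assumes "p > 0" and "d > 0"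
  shows "T_fps p d = H p ^ d"
proof (rule fps_ext)
  fix n
  show "fps_nth (T_fps p d) n = fps_nth (H p ^ d) n"
    unfolding T_fps_def H_S S_pow using T_W[OF assms(2)] by simp
qed

end
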